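(* Let $x<y$ be real numbers and let $\alpha\in(0,1)$. Let $f:[x,y]\to\mathbb{R}$ be a convex function and let $F:[x,y]\to\mathbb{R}$ be such that $F'=f$. Define $$S^1_\alpha f(x,y):=\frac{-\frac{\alpha}{1-\alpha}F(x)+\frac{2\alpha-1}{\alpha(1-\alpha)}F(\alpha x+(1-\alpha)y)+\frac{1-\alpha}{\alpha}F(y)}{y-x}.$$ Then $$f(\alpha x+(1-\alpha)y)\leq S^1_\alpha f(x,y)\leq\alpha f(x)+(1-\alpha)f(y).$$ *)

theory Defs
  imports "HOL-Analysis.Analysis"
begin

definition S1 :: "real \<Rightarrow> (real \<Rightarrow> real) \<Rightarrow> real \<Rightarrow> real \<Rightarrow> real" where
  "S1 \<alpha> F x y =
     (- (\<alpha> / (1 - \<alpha>)) * F x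
      + ((2 * \<alpha> - 1) / (\<alpha> * (1 - \<alpha>))) * F (\<alpha> * x + (1 - \<alpha>) * y)
      + ((1 - \<alpha>) / \<alpha>) * F y) / (y - x)"

end

theory Submission
  imports Defs
begin

lemma comp_deriv:
  assumes "\<And>t. t \<in> {x..y} \<Longrightarrow> (F has_real_derivative f t) (at t within {x..y})"
    and "\<And>u. u \<in> {0..1} \<Longrightarrow> p + u * c \<in> {x..y}" and "u \<in> {0..1::real}"
  shows "((\<lambda>u. F (p + u * c)) has_real_derivative f (p + u * c) * c) (at u within {0..1})"
proof -
  have g: "((\<lambda>u. p + u * c) has_real_derivative c) (at u within {0..1})"
    by (auto intro!: derivative_eq_intros)
  have im: "(\<lambda>u. p + u * c) ` {0..1} \<subseteq> {x..y}" using assms(2) by auto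
  have "(F has_real_derivative f (p + u * c)) (at (p + u * c) within (\<lambda>u. p + u * c) ` {0..1})"
    using has_field_derivative_subset[OF assms(1)[OF assms(2)[OF assms(3)]] im] .
  from DERIV_image_chain[OF this g] show ?thesis by (simp add: o_def)
qed

lemma mono_aux:
  fixes G g :: "real \<Rightarrow> real"
  assumes "\<And>u. u \<in> {0..1} \<Longrightarrow> (G has_real_derivative g u) (at u within {0..1})"
    and "\<And>u. u \<in> {0..1} \<Longrightarrow> g u \<ge> 0"
  shows "G 0 \<le> G 1"
proof -
  have "\<exists>u\<in>{0..1}. G 1 - G 0 = g u * (1 - 0)"
    using mvt_very_simple[of 0 1 G "\<lambda>u. (*) (g u)"] assms(1)
    by (simp add: has_field_derivative_def)
  then obtain u where "u \<in> {0..1}" "G 1 - G 0 = g u" by auto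
  with assms(2) show ?thesis by force
qed

theorem proposition2:
  fixes x y \<alpha> :: real and f F :: "real \<Rightarrow> real"
  assumes "x < y"
    and "0 < \<alpha>" and "\<alpha> < 1"
    and "convex_on {x..y} f"
    and "\<And>t. t \<in> {x..y} \<Longrightarrow> (F has_real_derivative f t) (at t within {x..y})"
  shows "f (\<alpha> * x + (1 - \<alpha>) * y) \<le> S1 \<alpha> F x y \<and>
         S1 \<alpha> F x y \<le> \<alpha> * f x + (1 - \<alpha>) * f y"
proof -
  define h where "h = y - x"
  define z where "z = \<alpha> * x + (1 - \<alpha>) * y"
  have h: "h > 0" using assms(1) h_def by simp
  have zx: "z - x = (1 - \<alpha>) * h" and yz: "y - z = \<alpha> * h"
    unfolding z_def h_def by (auto simp: algebra_simps)
  have a1: "1 - \<alpha> > 0" using assms(3) by simp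
  have zin: "x \<le> z" "z \<le> y" proof -
    have "0 \<le> (1 - \<alpha>) * h" "0 \<le> \<alpha> * h" using h assms(2) a1 by auto
    thus "x \<le> z" "z \<le> y" using zx yz by auto
  qed
  have S: "S1 \<alpha> F x y = \<alpha> / (1 - \<alpha>) * (F z - F x) / h + (1 - \<alpha>) / \<alpha> * (F y - F z) / h"
    proof -
    have ne: "h \<noteq> 0" "\<alpha> \<noteq> 0" "1 - \<alpha> \<noteq> 0" using h assms(2) a1 by auto
    have c: "(2 * \<alpha> - 1) / (\<alpha> * (1 - \<alpha>)) = \<alpha> / (1 - \<alpha>) - (1 - \<alpha>) / \<alpha>"
      using ne by (simp add: field_simps)
    show ?thesis unfolding S1_def z_def[symmetric] h_def[symmetric] c
      by (simp add: add_divide_distrib diff_divide_distrib algebra_simps)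
  qed
  have cvx: "f (a * s + (1 - a) * t) \<le> a * f s + (1 - a) * f t"
    if "s \<in> {x..y}" "t \<in> {x..y}" "0 \<le> a" "a \<le> 1" for s t a
    using convex_onD[OF assms(4), of "1 - a" s t] that by simp
  have fz: "f z \<le> \<alpha> * f x + (1 - \<alpha>) * f y"
    using cvx[of x y \<alpha>] zin assms(1,2,3) unfolding z_def by auto
  define c1 where "c1 = - ((1 - \<alpha>) * h)"
  define c2 where "c2 = \<alpha> * h"
  define c3 where "c3 = (1 - \<alpha>) * h"
  have m1: "z + u * c1 \<in> {x..y}" if "u \<in> {0..1}" for u
  proof -
    have "u * ((1 - \<alpha>) * h) \<le> 1 * ((1 - \<alpha>) * h)" using that a1 h
      by (intro mult_right_mono) auto
    moreover have "0 \<le> u * ((1 - \<alpha>) * h)" using that a1 h by auto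
    ultimately show ?thesis using zx zin unfolding c1_def by auto
  qed
  have m2: "z + u * c2 \<in> {x..y}" if "u \<in> {0..1}" for u
  proof -
    have "u * (\<alpha> * h) \<le> 1 * (\<alpha> * h)" using that assms(2) h
      by (intro mult_right_mono) auto
    moreover have "0 \<le> u * (\<alpha> * h)" using that assms(2) h by auto
    ultimately show ?thesis using yz zin unfolding c2_def by auto
  qed
  have m3: "x + u * c3 \<in> {x..y}" if "u \<in> {0..1}" for u
  proof -
    have "u * ((1 - \<alpha>) * h) \<le> 1 * ((1 - \<alpha>) * h)" using that a1 h
      by (intro mult_right_mono) auto
    moreover have "0 \<le> u * ((1 - \<alpha>) * h)" using that a1 h by auto
    ultimately show ?thesis using zx zin unfolding c3_def by auto
  qed
  note d1 = comp_deriv[OF assms(5) m1]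
  note d2 = comp_deriv[OF assms(5) m2]
  note d3 = comp_deriv[OF assms(5) m3]
  define A where "A = \<alpha> / ((1 - \<alpha>) * h)"
  define B where "B = (1 - \<alpha>) / (\<alpha> * h)"
  have S': "S1 \<alpha> F x y = A * (F z - F x) + B * (F y - F z)"
    unfolding S A_def B_def by (simp add: field_simps)
  have lower: "f z \<le> S1 \<alpha> F x y"
  proof -
    define G where "G = (\<lambda>u. - A * F (z + u * c1) + B * F (z + u * c2) - f z * u)"
    define g where "g = (\<lambda>u. - A * (f (z + u * c1) * c1) + B * (f (z + u * c2) * c2) - f z)"
    have "G 0 \<le> G 1"
    proof (rule mono_aux)
      fix u :: real assume u: "u \<in> {0..1}"
      show "(G has_real_derivative g u) (at u within {0..1})"
      proof -
        have l: "((\<lambda>u. f z * u) has_real_derivative f z) (at u within {0..1})"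
          by (auto intro!: derivative_eq_intros)
        show ?thesis unfolding G_def g_def
          by (intro DERIV_diff DERIV_add DERIV_cmult d1 d2 u l)
      qed
      have e: "g u = \<alpha> * f (z + u * c1) + (1 - \<alpha>) * f (z + u * c2) - f z"
        unfolding g_def A_def B_def c1_def c2_def using h a1 assms(2) by (simp add: field_simps)
      have "z = \<alpha> * (z + u * c1) + (1 - \<alpha>) * (z + u * c2)"
        unfolding c1_def c2_def by (simp add: algebra_simps)
      hence "f z \<le> \<alpha> * f (z + u * c1) + (1 - \<alpha>) * f (z + u * c2)"
        using cvx[OF m1[OF u] m2[OF u], of \<alpha>] assms(2,3) by simp
      thus "0 \<le> g u" using e by simp
    qed
    moreover have "z + c1 = x" "z + c2 = y" using zx yz unfolding c1_def c2_def by auto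
    ultimately show ?thesis unfolding S' G_def by (simp add: algebra_simps)
  qed
  have upper: "S1 \<alpha> F x y \<le> \<alpha> * f x + (1 - \<alpha>) * f y"
  proof -
    define P where "P = (\<lambda>u::real. \<alpha> * ((u - u * u / 2) * f x + u * u / 2 * f z)
       + (1 - \<alpha>) * ((u - u * u / 2) * f z + u * u / 2 * f y))"
    define G where "G = (\<lambda>u. P u - A * F (x + u * c3) - B * F (z + u * c2))"
    define g where "g = (\<lambda>u. (\<alpha> * ((1 - u) * f x + u * f z) + (1 - \<alpha>) * ((1 - u) * f z + u * f y))
       - A * (f (x + u * c3) * c3) - B * (f (z + u * c2) * c2))"
    have "G 0 \<le> G 1"
    proof (rule mono_aux)
      fix u :: real assume u: "u \<in> {0..1}"
      have dP: "(P has_real_derivative (\<alpha> * ((1 - u) * f x + u * f z) + (1 - \<alpha>) * ((1 - u) * f z + u * f y))) (at u within {0..1})"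
        unfolding P_def by (auto intro!: derivative_eq_intros simp: field_simps)
      show "(G has_real_derivative g u) (at u within {0..1})"
        unfolding G_def g_def
        by (intro DERIV_diff DERIV_cmult d3 d2 u dP)
      have e: "g u = \<alpha> * ((1 - u) * f x + u * f z - f (x + u * c3)) + (1 - \<alpha>) * ((1 - u) * f z + u * f y - f (z + u * c2))"
        unfolding g_def A_def B_def c3_def c2_def using h a1 assms(2) by (simp add: field_simps)
      have "x + u * c3 = (1 - u) * x + (1 - (1 - u)) * z" unfolding c3_def zx[symmetric]
        by (simp add: algebra_simps)
      hence i1: "f (x + u * c3) \<le> (1 - u) * f x + u * f z"
        using cvx[of x z "1 - u"] zin assms(1) u by simp
      have "z + u * c2 = (1 - u) * z + (1 - (1 - u)) * y" unfolding c2_def yz[symmetric]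
        by (simp add: algebra_simps)
      hence i2: "f (z + u * c2) \<le> (1 - u) * f z + u * f y"
        using cvx[of z y "1 - u"] zin assms(1) u by simp
      show "0 \<le> g u" unfolding e using i1 i2 assms(2) a1
        by (intro add_nonneg_nonneg mult_nonneg_nonneg) auto
    qed
    moreover have "x + c3 = z" "z + c2 = y" using zx yz unfolding c3_def c2_def by auto
    ultimately have "S1 \<alpha> F x y \<le> \<alpha> * (f x / 2 + f z / 2) + (1 - \<alpha>) * (f z / 2 + f y / 2)"
      unfolding S' G_def P_def by (simp add: algebra_simps)
    also have "\<alpha> * (f x / 2 + f z / 2) + (1 - \<alpha>) * (f z / 2 + f y / 2)
        = (\<alpha> * f x + (1 - \<alpha>) * f y) / 2 + f z / 2" by (simp add: field_simps)
    also have "\<dots> \<le> \<alpha> * f x + (1 - \<alpha>) * f y"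
    proof -
      have aux: "\<And>M c::real. c \<le> M \<Longrightarrow> M / 2 + c / 2 \<le> M" by simp
      show ?thesis by (rule aux[OF fz])
    qed
    finally show ?thesis .
  qed
  show ?thesis using lower upper unfolding z_def by simp
qed

end
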